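(* Consider two pairs of lines in the plane. (1) If one pair consists of parallel lines, then the rectangle locus for the pairs is a line, a line missing an open segment, a point, or the empty set. (2) The rectangle locus is the entire plane if and only if each pair consists of orthogonal lines and all four lines meet at the same point. (3) Suppose neither pair consists of parallel lines. If the crossing points of the two pairs are different and either both pairs consist of orthogonal lines or one pair is a translation of the other, then the rectangle locus is a line.
   Context: A pair of lines means two distinct lines; two pairs of lines are distinct pairs, possibly sharing one line. The rectangle locus of two pairs $L_1,L_3$ and $L_2,L_4$ is the set of points $p$ in the plane that are the center of a (possibly degenerate) rectangle one of whose diagonals joins $L_1$ and $L_3$ and the other joins $L_2$ and $L_4$; equivalently, $p$ is the midpoint both of a segment joining $L_1$ and $L_3$ and of a segment joining $L_2$ and $L_4$, these two segments having equal length. A pair is a translation of the other if it is its image under a translation of the plane. *)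

theory Defs
  imports "HOL-Analysis.Analysis"
begin

type_synonym point = "real^2"

definition line_through :: "point \<Rightarrow> point \<Rightarrow> point set" where
  "line_through p v = {p + t *\<^sub>R v | t. True}"

definition is_line :: "point set \<Rightarrow> bool" where
  "is_line L \<longleftrightarrow> (\<exists>p v. v \<noteq> 0 \<and> L = line_through p v)"

definition parallel_lines :: "point set \<Rightarrow> point set \<Rightarrow> bool" where
  "parallel_lines L M \<longleftrightarrow>
     (\<exists>p q v. v \<noteq> 0 \<and> L = line_through p v \<and> M = line_through q v)"

definition orthogonal_lines :: "point set \<Rightarrow> point set \<Rightarrow> bool" where
  "orthogonal_lines L M \<longleftrightarrow>
     (\<exists>p q v w. v \<noteq> 0 \<and> w \<noteq> 0 \<and> L = line_through p v \<and> M = line_through q w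
        \<and> inner v w = 0)"

definition rectangle_locus :: "point set \<Rightarrow> point set \<Rightarrow> point set \<Rightarrow> point set \<Rightarrow> point set" where
  "rectangle_locus L1 L3 L2 L4 =
     {p. \<exists>a c b d. a \<in> L1 \<and> c \<in> L3 \<and> b \<in> L2 \<and> d \<in> L4 \<and>
          midpoint a c = p \<and> midpoint b d = p \<and> dist a c = dist b d}"

definition translate_set :: "point \<Rightarrow> point set \<Rightarrow> point set" where
  "translate_set v L = (\<lambda>x. x + v) ` L"

end

theory Submission
  imports Defs
begin

definition cr :: "point \<Rightarrow> point \<Rightarrow> real" where
  "cr x y = x$1 * y$2 - x$2 * y$1"

lemma vec2_eq: "(x::point) = y \<longleftrightarrow> x$1 = y$1 \<and> x$2 = y$2"
  by (simp add: vec_eq_iff forall_2)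

lemma inner2: "(x::point) \<bullet> y = x$1*y$1 + x$2*y$2"
  by (simp add: inner_vec_def sum_2)

lemma dist2: "dist (x::point) y = sqrt((x$1-y$1)^2 + (x$2-y$2)^2)"
  by (simp add: dist_norm norm_eq_sqrt_inner inner2 power2_eq_square)

lemma nz2: "(v::point) \<noteq> 0 \<longleftrightarrow> v$1 \<noteq> 0 \<or> v$2 \<noteq> 0"
  by (simp add: vec2_eq)

lemma mem_line:
  assumes "v \<noteq> 0"
  shows "x \<in> line_through p v \<longleftrightarrow> cr (x - p) v = 0"
proof
  assume "x \<in> line_through p v"
  then obtain t where "x = p + t *\<^sub>R v" by (auto simp: line_through_def)
  then show "cr (x - p) v = 0" by (simp add: cr_def algebra_simps)
next
  assume h: "cr (x - p) v = 0"
  have s: "v$1^2 + v$2^2 \<noteq> 0" using assms by (simp add: nz2 add_nonneg_eq_0_iff)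
  define t where "t = ((x$1-p$1)* v$1 + (x$2-p$2)* v$2) / (v$1^2 + v$2^2)"
  have "x = p + t *\<^sub>R v"
    using h s unfolding vec2_eq t_def cr_def
    by (auto simp: field_simps power2_eq_square) algebra+
  then show "x \<in> line_through p v" by (auto simp: line_through_def)
qed


definition HL :: "point set \<Rightarrow> point set \<Rightarrow> point \<Rightarrow> real \<Rightarrow> bool" where
  "HL L L' p h \<longleftrightarrow> (\<exists>a c. a \<in> L \<and> c \<in> L' \<and> midpoint a c = p \<and> dist a c = h)"

lemma locus_HL: "rectangle_locus L1 L3 L2 L4 = {p. \<exists>h. HL L1 L3 p h \<and> HL L2 L4 p h}"
  unfolding rectangle_locus_def HL_def by blast

lemma HL_sym: "HL L L' p h = HL L' L p h"
  unfolding HL_def by (metis midpoint_sym dist_commute)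

lemma locus_sym: "rectangle_locus L1 L3 L2 L4 = rectangle_locus L2 L4 L1 L3"
  unfolding locus_HL by blast

definition G :: "point \<Rightarrow> point \<Rightarrow> point \<Rightarrow> real" where
  "G e f x = (x$1^2 + x$2^2) - 4*(e$1*f$1+e$2*f$2)*cr x f*cr e x/(cr e f)^2"

lemma cramer1:
  fixes e1 e2 f1 f2 xa xb k :: real
  assumes "k = e1*f2 - e2*f1" "k \<noteq> 0"
  shows "xa = ((2*(xa*f2-xb*f1)/k)*e1 + (2*(e1*xb-e2*xa)/k)*f1)/2"
        "xb = ((2*(xa*f2-xb*f1)/k)*e2 + (2*(e1*xb-e2*xa)/k)*f2)/2"
proof -
  have "xa * k = (xa*f2-xb*f1)*e1 + (e1*xb-e2*xa)*f1" unfolding assms(1) by (simp add: algebra_simps)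
  then show "xa = ((2*(xa*f2-xb*f1)/k)*e1 + (2*(e1*xb-e2*xa)/k)*f1)/2" using assms(2) by (simp add: field_simps) algebra?
  have "xb * k = (xa*f2-xb*f1)*e2 + (e1*xb-e2*xa)*f2" unfolding assms(1) by (simp add: algebra_simps)
  then show "xb = ((2*(xa*f2-xb*f1)/k)*e2 + (2*(e1*xb-e2*xa)/k)*f2)/2" using assms(2) by (simp add: field_simps) algebra?
qed
lemma alg1:
  fixes e1 e2 f1 f2 s r x1 x2 k :: real
  assumes "k = e1*f2 - e2*f1" "k \<noteq> 0" "x1 = (s*e1 + r*f1)/2" "x2 = (s*e2+r*f2)/2"
  shows "(s*e1 - r*f1)^2 + (s*e2 - r*f2)^2 =
     4*((x1^2+x2^2) - 4*(e1*f1+e2*f2)*(x1*f2 - x2*f1)*(e1*x2 - e2*x1)/k^2)"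
proof -
  have a: "x1*f2 - x2*f1 = s*k/2" "e1*x2-e2*x1 = r*k/2" unfolding assms(1,3,4) by (simp_all add: field_simps)
  have b: "4*(e1*f1+e2*f2)*(s*k/2)*(r*k/2)/k^2 = (e1*f1+e2*f2)* s*r"
    using assms(2) by (simp add: field_simps power2_eq_square)
  show ?thesis unfolding a b unfolding assms(3,4) by (simp add: power2_eq_square field_simps)
qed

lemma dist_sq: "dist (a::point) c = h \<longleftrightarrow> h \<ge> 0 \<and> h^2 = (a$1-c$1)^2 + (a$2-c$2)^2"
  unfolding dist2 by (auto simp: real_sqrt_unique)

lemma midpoint2: "midpoint (a::point) c = p \<longleftrightarrow> a$1 + c$1 = 2*p$1 \<and> a$2 + c$2 = 2*p$2"
  unfolding vec2_eq midpoint_def by auto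

lemma HL_np:
  assumes k: "cr e f \<noteq> 0"
  shows "HL (line_through z e) (line_through z f) p h \<longleftrightarrow> h \<ge> 0 \<and> h^2 = 4 * G e f (p - z)"
proof
  assume "HL (line_through z e) (line_through z f) p h"
  then obtain s r where m: "midpoint (z + s *\<^sub>R e) (z + r *\<^sub>R f) = p" and d: "dist (z + s *\<^sub>R e) (z + r *\<^sub>R f) = h"
    unfolding HL_def line_through_def by blast
  have x1: "(p - z)$1 = (s*e$1 + r*f$1)/2" and x2: "(p - z)$2 = (s*e$2 + r*f$2)/2"
    using m unfolding midpoint2 by auto
  show "h \<ge> 0 \<and> h^2 = 4 * G e f (p - z)"
    using d unfolding dist_sq G_def
    using alg1[OF refl k[unfolded cr_def] x1 x2] by (simp add: cr_def algebra_simps)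
next
  assume h: "h \<ge> 0 \<and> h^2 = 4 * G e f (p - z)"
  define x where "x = p - z"
  define s where "s = 2 * cr x f / cr e f"
  define r where "r = 2 * cr e x / cr e f"
  note cc = cramer1[where xa="x$1" and xb="x$2", OF refl k[unfolded cr_def]]
  have x1: "x$1 = (s * e$1 + r * f$1)/2" and x2: "x$2 = (s * e$2 + r * f$2)/2"
    unfolding s_def r_def cr_def using cc by simp_all
  have m: "midpoint (z + s *\<^sub>R e) (z + r *\<^sub>R f) = p"
    unfolding midpoint2 using x1 x2 unfolding x_def by auto
  have d: "dist (z + s *\<^sub>R e) (z + r *\<^sub>R f) = h"
    unfolding dist_sq using h unfolding G_def x_def[symmetric]
    using alg1[OF refl k[unfolded cr_def] x1 x2] by (simp add: cr_def algebra_simps)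
  show "HL (line_through z e) (line_through z f) p h"
    unfolding HL_def line_through_def using m d by blast
qed


lemma lagr: "((w1::real)^2+w2^2)*(v1^2+v2^2) = (w1* v1+w2* v2)^2 + (w1* v2-w2* v1)^2"
  by (simp add: power2_eq_square algebra_simps)

lemma quad_sol:
  fixes V b W hh D t :: real
  assumes "V > 0" "D = b^2 - V*(W - hh)" "D \<ge> 0" "t = (sqrt D - b)/V"
  shows "V*t^2 + 2*b*t + W - hh = 0"
proof -
  have R: "sqrt D ^2 = D" using assms(3) by simp
  have "V*t^2 + 2*b*t = ((sqrt D - b)^2 + 2*b*(sqrt D - b))/V"
    using assms(1) unfolding assms(4) by (simp add: field_simps power2_eq_square)
  also have "... = (sqrt D ^2 - b^2)/V" by (simp add: power2_eq_square algebra_simps)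
  also have "... = (D - b^2)/V" using R by simp
  also have "... = -(W - hh)" unfolding assms(2) using assms(1) by (simp add: field_simps)
  finally show ?thesis by simp
qed

lemma sqv_pos: "(v::point) \<noteq> 0 \<Longrightarrow> v$1^2 + v$2^2 > 0"
  by (simp add: nz2 sum_power2_gt_zero_iff)

lemma HL_par:
  assumes v: "v \<noteq> 0"
  shows "HL (line_through P v) (line_through Q v) p h \<longleftrightarrow>
     cr (p - midpoint P Q) v = 0 \<and> h \<ge> 0 \<and> h^2 * (v$1^2 + v$2^2) \<ge> (cr (P - Q) v)^2"
proof
  assume "HL (line_through P v) (line_through Q v) p h"
  then obtain s r where m: "midpoint (P + s *\<^sub>R v) (Q + r *\<^sub>R v) = p" and d: "dist (P + s *\<^sub>R v) (Q + r *\<^sub>R v) = h"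
    unfolding HL_def line_through_def by blast
  have p1: "2 * p$1 = P$1 + Q$1 + (s + r) * v$1" and p2: "2 * p$2 = P$2 + Q$2 + (s + r) * v$2"
    using m unfolding midpoint2 by (auto simp: algebra_simps)
  have c0: "cr (p - midpoint P Q) v = 0"
    unfolding cr_def midpoint_def using p1 p2 by (simp add: field_simps) algebra?
  have h0: "h \<ge> 0" and hh: "h^2 = (P$1 - Q$1 + (s - r) * v$1)^2 + (P$2 - Q$2 + (s - r) * v$2)^2"
    using d unfolding dist_sq by (auto simp: algebra_simps)
  have "h^2 * (v$1^2 + v$2^2) = ((P$1 - Q$1 + (s - r) * v$1) * v$1 + (P$2 - Q$2 + (s - r) * v$2) * v$2)^2
        + ((P$1 - Q$1 + (s - r) * v$1) * v$2 - (P$2 - Q$2 + (s - r) * v$2) * v$1)^2"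
    unfolding hh by (rule lagr)
  also have "((P$1 - Q$1 + (s - r) * v$1) * v$2 - (P$2 - Q$2 + (s - r) * v$2) * v$1) = cr (P - Q) v"
    unfolding cr_def by (simp add: algebra_simps)
  finally have "h^2 * (v$1^2 + v$2^2) \<ge> (cr (P - Q) v)^2" by simp
  then show "cr (p - midpoint P Q) v = 0 \<and> h \<ge> 0 \<and> h^2 * (v$1^2 + v$2^2) \<ge> (cr (P - Q) v)^2"
    using c0 h0 by simp
next
  assume H: "cr (p - midpoint P Q) v = 0 \<and> h \<ge> 0 \<and> h^2 * (v$1^2 + v$2^2) \<ge> (cr (P - Q) v)^2"
  then have "p \<in> line_through (midpoint P Q) v" using mem_line[OF v] by simp
  then obtain \<sigma> where ps: "p = midpoint P Q + \<sigma> *\<^sub>R v" unfolding line_through_def by blast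
  define V where "V = v$1^2 + v$2^2"
  define w1 where "w1 = P$1 - Q$1"
  define w2 where "w2 = P$2 - Q$2"
  define b where "b = w1 * v$1 + w2 * v$2"
  define W where "W = w1^2 + w2^2"
  define D where "D = b^2 - V*(W - h^2)"
  define t where "t = (sqrt D - b)/V"
  have V: "V > 0" unfolding V_def using sqv_pos[OF v] .
  have "W * V = b^2 + (cr (P - Q) v)^2" unfolding W_def V_def b_def cr_def w1_def w2_def
    by (simp add: lagr)
  then have D0: "D \<ge> 0" unfolding D_def using H V_def by (simp add: algebra_simps)
  have q: "V*t^2 + 2*b*t + W - h^2 = 0" by (rule quad_sol[OF V D_def D0 t_def])
  define a where "a = P + (\<sigma> + t/2) *\<^sub>R v"
  define c where "c = Q + (\<sigma> - t/2) *\<^sub>R v"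
  have "midpoint a c = p" unfolding a_def c_def ps midpoint2 by (simp add: midpoint_def algebra_simps)
  moreover have "dist a c = h" unfolding dist_sq using H q
    unfolding a_def c_def V_def b_def W_def w1_def w2_def by (simp add: power2_eq_square algebra_simps)
  moreover have "a \<in> line_through P v" "c \<in> line_through Q v" unfolding a_def c_def line_through_def by auto
  ultimately show "HL (line_through P v) (line_through Q v) p h" unfolding HL_def by blast
qed


lemma cr_diff1: "cr (a - b) v = cr a v - cr b v" by (simp add: cr_def algebra_simps)
lemma cr_add1: "cr (a + b) v = cr a v + cr b v" by (simp add: cr_def algebra_simps)
lemma cr_scale1: "cr (t *\<^sub>R a) v = t * cr a v" by (simp add: cr_def algebra_simps)
lemma cr_diff2: "cr v (a - b) = cr v a - cr v b" by (simp add: cr_def algebra_simps)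
lemma cr_add2: "cr v (a + b) = cr v a + cr v b" by (simp add: cr_def algebra_simps)
lemma cr_scale2: "cr v (t *\<^sub>R a) = t * cr v a" by (simp add: cr_def algebra_simps)
lemma cr_anti: "cr a b = - cr b a" by (simp add: cr_def algebra_simps)
lemma cr_self[simp]: "cr a a = 0" by (simp add: cr_def algebra_simps)
lemmas cr_lin = cr_diff1 cr_add1 cr_scale1 cr_diff2 cr_add2 cr_scale2

lemma cr3:
  assumes "u \<noteq> 0" "cr u a = 0" "cr u b = 0"
  shows "cr a b = 0"
proof -
  have "u$1 * cr a b = 0" "u$2 * cr a b = 0" using assms(2,3) unfolding cr_def by algebra+
  then show ?thesis using assms(1) unfolding nz2 by auto
qed

lemma line_eq_dir:
  assumes "v \<noteq> 0" "w \<noteq> 0" "cr v w = 0"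
  shows "line_through z v = line_through z w"
proof -
  have "cr (x - z) v = 0 \<longleftrightarrow> cr (x - z) w = 0" for x
    using cr3[OF assms(1) _ assms(3), of "x - z"] cr3[OF assms(2) _ _, of "v" "x - z"]
      cr_anti[of v w] cr_anti[of "x - z" v] cr_anti[of "x - z" w] assms(3) by auto
  then show ?thesis using mem_line[OF assms(1)] mem_line[OF assms(2)] by blast
qed

lemma rebase:
  assumes "x \<in> line_through p v"
  shows "line_through p v = line_through x v"
proof -
  obtain t where x: "x = p + t *\<^sub>R v" using assms unfolding line_through_def by blast
  have "p + s *\<^sub>R v = x + (s - t) *\<^sub>R v" for s unfolding x by (simp add: algebra_simps)
  moreover have "x + s *\<^sub>R v = p + (s + t) *\<^sub>R v" for s unfolding x by (simp add: algebra_simps)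
  ultimately show ?thesis unfolding line_through_def by blast
qed

lemma np_lines:
  assumes "is_line L" "is_line L'" "\<not> parallel_lines L L'"
  shows "\<exists>z e f. e \<noteq> 0 \<and> f \<noteq> 0 \<and> cr e f \<noteq> 0 \<and> L = line_through z e \<and> L' = line_through z f"
proof -
  obtain p e where e: "e \<noteq> 0" "L = line_through p e" using assms(1) unfolding is_line_def by blast
  obtain q f where f: "f \<noteq> 0" "L' = line_through q f" using assms(2) unfolding is_line_def by blast
  have k: "cr e f \<noteq> 0"
  proof
    assume "cr e f = 0"
    then have "L' = line_through q e" using line_eq_dir[OF e(1) f(1)] f(2) by simp
    then show False using assms(3) e unfolding parallel_lines_def by blast
  qed
  define s where "s = cr (q - p) f / cr e f"
  define z where "z = p + s *\<^sub>R e"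
  have zL: "z \<in> line_through p e" unfolding z_def line_through_def by blast
  have "s * cr e f = cr (q - p) f" unfolding s_def using k by simp
  then have "cr (z - q) f = 0" unfolding z_def cr_lin by simp
  then have zL': "z \<in> line_through q f" using mem_line[OF f(1)] by simp
  show ?thesis using rebase[OF zL] rebase[OF zL'] e f k by blast
qed

lemma inter_np:
  assumes "cr e f \<noteq> 0"
  shows "line_through z e \<inter> line_through z f = {z}"
proof -
  have e: "e \<noteq> 0" and f: "f \<noteq> 0" using assms unfolding cr_def nz2 by auto
  have "x = z" if "x \<in> line_through z e" "x \<in> line_through z f" for x
  proof (rule ccontr)
    assume "x \<noteq> z"
    then have "x - z \<noteq> 0" by simp
    moreover have "cr (x - z) e = 0" "cr (x - z) f = 0" using that mem_line[OF e] mem_line[OF f] by auto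
    ultimately show False using cr3 assms by blast
  qed
  moreover have "z \<in> line_through z e" "z \<in> line_through z f"
    unfolding line_through_def by (auto intro: exI[of _ 0])
  ultimately show ?thesis by blast
qed

lemma is_line_eq:
  assumes "\<alpha> \<noteq> 0 \<or> \<beta> \<noteq> 0"
  shows "is_line {p::point. \<alpha> * p$1 + \<beta> * p$2 = \<gamma>}"
proof -
  define N where "N = \<alpha>^2 + \<beta>^2"
  have N: "N > 0" unfolding N_def using assms by (simp add: sum_power2_gt_zero_iff)
  define p0 :: point where "p0 = vector [\<gamma> * \<alpha> / N, \<gamma> * \<beta> / N]"
  define v :: point where "v = vector [- \<beta>, \<alpha>]"
  have v: "v \<noteq> 0" unfolding v_def nz2 using assms by auto
  have "\<alpha> * p0$1 + \<beta> * p0$2 = \<gamma> * (\<alpha>^2 + \<beta>^2) / N" unfolding p0_def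
    by (simp add: power2_eq_square add_divide_distrib algebra_simps)
  also have "... = \<gamma>" using N unfolding N_def by (metis less_irrefl nonzero_mult_div_cancel_right)
  finally have "\<alpha> * p0$1 + \<beta> * p0$2 = \<gamma>" .
  then have "cr (x - p0) v = 0 \<longleftrightarrow> \<alpha> * x$1 + \<beta> * x$2 = \<gamma>" for x
    unfolding cr_def v_def by (auto simp: algebra_simps)
  then have "{p::point. \<alpha> * p$1 + \<beta> * p$2 = \<gamma>} = line_through p0 v"
    using mem_line[OF v] by auto
  then show ?thesis unfolding is_line_def using v by blast
qed

lemma translate_line: "translate_set v (line_through p e) = line_through (p + v) e"
  unfolding translate_set_def line_through_def by (auto simp: algebra_simps image_iff)

lemma two_midlines:
  fixes A B :: point
  assumes v: "v \<noteq> 0" and w: "w \<noteq> 0"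
  defines "S \<equiv> {p. cr (p - A) v = 0 \<and> cr (p - B) w = 0}"
  shows "is_line S \<or> (\<exists>x. S = {x}) \<or> S = {}"
proof (cases "cr v w = 0")
  case False
  define s where "s = cr (B - A) w / cr v w"
  define z where "z = A + s *\<^sub>R v"
  have "s * cr v w = cr (B - A) w" unfolding s_def using False by simp
  then have "z \<in> S" unfolding S_def z_def by (simp add: cr_lin)
  moreover have "x = y" if "x \<in> S" "y \<in> S" for x y
  proof (rule ccontr)
    assume "x \<noteq> y"
    then have "x - y \<noteq> 0" by simp
    moreover have "cr (x - y) v = 0" "cr (x - y) w = 0" using that unfolding S_def
      by (auto simp: cr_lin)
    ultimately show False using cr3 False by blast
  qed
  ultimately have "S = {z}" by blast
  then show ?thesis by blast
next
  case True
  show ?thesis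
  proof (cases "S = {}")
    case False
    then obtain x0 where x0: "x0 \<in> S" by blast
    have "p \<in> S \<longleftrightarrow> cr (p - x0) v = 0" for p
    proof -
      have a: "cr (x0 - A) v = 0" "cr (x0 - B) w = 0" using x0 unfolding S_def by auto
      have "cr (p - A) v = cr (p - x0) v" "cr (p - B) w = cr (p - x0) w"
        using a unfolding cr_lin by auto
      moreover have "cr (p - x0) v = 0 \<longleftrightarrow> cr (p - x0) w = 0"
        using cr3[OF v, of "p - x0" w] cr3[OF w, of "p - x0" v] True cr_anti[of v w]
          cr_anti[of "p - x0" v] cr_anti[of "p - x0" w] by auto
      ultimately show ?thesis unfolding S_def by auto
    qed
    then have "S = line_through x0 v" using mem_line[OF v] by auto
    then show ?thesis unfolding is_line_def using v by blast
  qed simp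
qed


definition Cg :: "point \<Rightarrow> point \<Rightarrow> real" where
  "Cg e f = 4*(e$1*f$1+e$2*f$2)/(cr e f)^2"

lemma G_alt: "G e f x = (x$1^2 + x$2^2) - Cg e f * (cr x f * cr e x)"
  unfolding G_def Cg_def by simp

lemma G_quad: "G e f (y + t *\<^sub>R v) = G e f y + t * (G e f (y + v) - G e f y - G e f v) + t^2 * G e f v"
  unfolding G_alt cr_def by (simp add: algebra_simps power2_eq_square)

lemma G_neg: "G e f (- x) = G e f x"
  unfolding G_alt cr_def by (simp add: algebra_simps power2_eq_square)

lemma G_pd:
  assumes k: "cr e f \<noteq> 0"
  shows "G e f x \<ge> 0" "G e f x = 0 \<Longrightarrow> x = 0"
proof -
  define s where "s = 2 * cr x f / cr e f"
  define r where "r = 2 * cr e x / cr e f"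
  note cc = cramer1[where xa="x$1" and xb="x$2", OF refl k[unfolded cr_def]]
  have x1: "x$1 = (s * e$1 + r * f$1)/2" and x2: "x$2 = (s * e$2 + r * f$2)/2"
    unfolding s_def r_def cr_def using cc by simp_all
  have g: "(s * e$1 - r * f$1)^2 + (s * e$2 - r * f$2)^2 = 4 * G e f x"
    unfolding G_def using alg1[OF refl k[unfolded cr_def] x1 x2] by (simp add: cr_def algebra_simps)
  have "0 \<le> (s * e$1 - r * f$1)^2 + (s * e$2 - r * f$2)^2" by simp
  then show "G e f x \<ge> 0" using g by linarith
  assume "G e f x = 0"
  then have "(s * e$1 - r * f$1)^2 + (s * e$2 - r * f$2)^2 = 0" using g by simp
  then have a: "s * e$1 = r * f$1" "s * e$2 = r * f$2" by (simp_all add: sum_power2_eq_zero_iff)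
  have "s * cr e f = 0" "r * cr e f = 0" using a unfolding cr_def by algebra+
  then have "s = 0" "r = 0" using k by auto
  then show "x = 0" using x1 x2 unfolding vec2_eq by simp
qed

lemma quad_roots:
  fixes A B C :: real
  assumes A: "A > 0" and D: "B^2 - 4*A*C > 0"
  defines "t1 \<equiv> (-B - sqrt (B^2 - 4*A*C))/(2*A)"
  defines "t2 \<equiv> (-B + sqrt (B^2 - 4*A*C))/(2*A)"
  shows "t1 < t2" "A*t^2 + B*t + C \<ge> 0 \<longleftrightarrow> \<not> (t1 < t \<and> t < t2)"
proof -
  define R where "R = sqrt (B^2 - 4*A*C)"
  have R: "R > 0" "R^2 = B^2 - 4*A*C" unfolding R_def using D by auto
  show "t1 < t2" unfolding t1_def t2_def R_def[symmetric] using R A by (simp add: divide_strict_right_mono)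
  have "A*t^2 + B*t + C = A * ((t - t1) * (t - t2))"
    unfolding t1_def t2_def R_def[symmetric] using A R(2)
    by (simp add: field_simps power2_eq_square) algebra?
  then have "A*t^2 + B*t + C \<ge> 0 \<longleftrightarrow> (t - t1) * (t - t2) \<ge> 0" using A by (simp add: zero_le_mult_iff)
  also have "... \<longleftrightarrow> \<not> (t1 < t \<and> t < t2)" using \<open>t1 < t2\<close> by (auto simp: zero_le_mult_iff)
  finally show "A*t^2 + B*t + C \<ge> 0 \<longleftrightarrow> \<not> (t1 < t \<and> t < t2)" .
qed


lemma seg_param:
  fixes m v :: point
  assumes v: "v \<noteq> 0" and t12: "t1 < t2"
  shows "m + t *\<^sub>R v \<in> open_segment (m + t1 *\<^sub>R v) (m + t2 *\<^sub>R v) \<longleftrightarrow> t1 < t \<and> t < t2"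
proof -
  have ne: "m + t1 *\<^sub>R v \<noteq> m + t2 *\<^sub>R v" using v t12 by simp
  have eq: "(1 - u) *\<^sub>R (m + t1 *\<^sub>R v) + u *\<^sub>R (m + t2 *\<^sub>R v) = m + ((1 - u) * t1 + u * t2) *\<^sub>R v" for u
    by (simp add: algebra_simps)
  have "m + t *\<^sub>R v \<in> open_segment (m + t1 *\<^sub>R v) (m + t2 *\<^sub>R v) \<longleftrightarrow>
        (\<exists>u. 0 < u \<and> u < 1 \<and> t = (1 - u) * t1 + u * t2)"
    unfolding in_segment(2) eq using ne v by simp
  also have "... \<longleftrightarrow> t1 < t \<and> t < t2"
  proof
    assume "\<exists>u. 0 < u \<and> u < 1 \<and> t = (1 - u) * t1 + u * t2"
    then obtain u where u: "0 < u" "u < 1" "t = (1 - u) * t1 + u * t2" by blast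
    have "t - t1 = u * (t2 - t1)" "t2 - t = (1 - u) * (t2 - t1)" using u(3) by (simp_all add: algebra_simps)
    moreover have "u * (t2 - t1) > 0" "(1 - u) * (t2 - t1) > 0" using u t12 by simp_all
    ultimately show "t1 < t \<and> t < t2" by linarith
  next
    assume t: "t1 < t \<and> t < t2"
    define u where "u = (t - t1) / (t2 - t1)"
    have "0 < u" "u < 1" unfolding u_def using t t12 by (simp_all add: field_simps)
    moreover have "u * (t2 - t1) = t - t1" unfolding u_def using t12 by simp
    then have "t = (1 - u) * t1 + u * t2" by (simp add: algebra_simps)
    ultimately show "\<exists>u. 0 < u \<and> u < 1 \<and> t = (1 - u) * t1 + u * t2" by blast
  qed
  finally show ?thesis .
qed

lemma quad_set:
  fixes m v :: point and A B C :: real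
  assumes v: "v \<noteq> 0" and A: "A > 0"
  defines "S \<equiv> {m + t *\<^sub>R v | t. A*t^2 + B*t + C \<ge> 0}"
  shows "is_line S \<or> (\<exists>L a b. is_line L \<and> a \<in> L \<and> b \<in> L \<and> a \<noteq> b \<and> S = L - open_segment a b)"
proof (cases "B^2 - 4*A*C > 0")
  case False
  have "A*t^2 + B*t + C \<ge> 0" for t
  proof -
    have "4*A*(A*t^2 + B*t + C) = (2*A*t + B)^2 - (B^2 - 4*A*C)" by (simp add: algebra_simps power2_eq_square)
    also have "... \<ge> 0" using False by (smt (verit) zero_le_power2)
    finally show ?thesis using A by (simp add: zero_le_mult_iff)
  qed
  then have "S = line_through m v" unfolding S_def line_through_def by auto
  then show ?thesis unfolding is_line_def using v by blast
next
  case True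
  define t1 where "t1 = (-B - sqrt (B^2 - 4*A*C))/(2*A)"
  define t2 where "t2 = (-B + sqrt (B^2 - 4*A*C))/(2*A)"
  note qr = quad_roots[OF A True, folded t1_def t2_def]
  define L where "L = line_through m v"
  have L: "is_line L" unfolding L_def is_line_def using v by blast
  have ab: "m + t1 *\<^sub>R v \<in> L" "m + t2 *\<^sub>R v \<in> L" "m + t1 *\<^sub>R v \<noteq> m + t2 *\<^sub>R v"
    unfolding L_def line_through_def using qr(1) v by auto
  have "S = L - open_segment (m + t1 *\<^sub>R v) (m + t2 *\<^sub>R v)"
  proof
    show "S \<subseteq> L - open_segment (m + t1 *\<^sub>R v) (m + t2 *\<^sub>R v)"
      unfolding S_def L_def line_through_def using seg_param[OF v qr(1)] qr(2) by auto
    show "L - open_segment (m + t1 *\<^sub>R v) (m + t2 *\<^sub>R v) \<subseteq> S"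
      unfolding S_def L_def line_through_def using seg_param[OF v qr(1)] qr(2) by auto
  qed
  then show ?thesis using L ab by blast
qed


abbreviation "part1_concl R \<equiv> is_line R
      \<or> (\<exists>L a b. is_line L \<and> a \<in> L \<and> b \<in> L \<and> a \<noteq> b \<and> R = L - open_segment a b)
      \<or> (\<exists>x. R = {x}) \<or> R = {}"

lemma part1_pp:
  assumes v: "v \<noteq> 0" and w: "w \<noteq> 0"
  shows "rectangle_locus (line_through P v) (line_through Q v) (line_through P' w) (line_through Q' w)
     = {p. cr (p - midpoint P Q) v = 0 \<and> cr (p - midpoint P' Q') w = 0}"
proof -
  define V where "V = v$1^2 + v$2^2"
  define W where "W = w$1^2 + w$2^2"
  have V: "V > 0" unfolding V_def using sqv_pos[OF v] .
  have W: "W > 0" unfolding W_def using sqv_pos[OF w] .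
  have "(\<exists>h. HL (line_through P v) (line_through Q v) p h \<and> HL (line_through P' w) (line_through Q' w) p h)
    \<longleftrightarrow> cr (p - midpoint P Q) v = 0 \<and> cr (p - midpoint P' Q') w = 0" for p
  proof
    assume "\<exists>h. HL (line_through P v) (line_through Q v) p h \<and> HL (line_through P' w) (line_through Q' w) p h"
    then show "cr (p - midpoint P Q) v = 0 \<and> cr (p - midpoint P' Q') w = 0"
      unfolding HL_par[OF v] HL_par[OF w] by blast
  next
    assume H: "cr (p - midpoint P Q) v = 0 \<and> cr (p - midpoint P' Q') w = 0"
    define X where "X = (cr (P - Q) v)^2 / V + (cr (P' - Q') w)^2 / W"
    have X0: "X \<ge> 0" unfolding X_def using V W by simp
    define h where "h = sqrt X"
    have h: "h \<ge> 0" "h^2 = X" unfolding h_def using X0 by auto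
    have "(cr (P - Q) v)^2 / V \<le> X" "(cr (P' - Q') w)^2 / W \<le> X" unfolding X_def using V W by simp_all
    then have "(cr (P - Q) v)^2 \<le> h^2 * V" "(cr (P' - Q') w)^2 \<le> h^2 * W"
      using V W h(2) by (simp_all add: divide_le_eq)
    then show "\<exists>h. HL (line_through P v) (line_through Q v) p h \<and> HL (line_through P' w) (line_through Q' w) p h"
      unfolding HL_par[OF v] HL_par[OF w] using H h(1) V_def W_def by blast
  qed
  then show ?thesis unfolding locus_HL by blast
qed

lemma part1_pn:
  assumes v: "v \<noteq> 0" and k: "cr e f \<noteq> 0"
  shows "part1_concl (rectangle_locus (line_through P v) (line_through Q v) (line_through z e) (line_through z f))"
proof -
  define V where "V = v$1^2 + v$2^2"
  have V: "V > 0" unfolding V_def using sqv_pos[OF v] .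
  define m where "m = midpoint P Q"
  define c where "c = cr (P - Q) v"
  define y where "y = m - z"
  define Bc where "Bc = G e f (y + v) - G e f y - G e f v"
  define A where "A = 4 * V * G e f v"
  define B where "B = 4 * V * Bc"
  define C where "C = 4 * V * G e f y - c^2"
  have Gv: "G e f v > 0" using G_pd[OF k, of v] v by fastforce
  have A: "A > 0" unfolding A_def using V Gv by simp
  have expand: "4 * G e f (m + t *\<^sub>R v - z) * V - c^2 = A*t^2 + B*t + C" for t
  proof -
    have eq: "m + t *\<^sub>R v - z = y + t *\<^sub>R v" unfolding y_def by (simp add: algebra_simps)
    show ?thesis unfolding eq G_quad A_def B_def C_def Bc_def by (simp add: algebra_simps)
  qed
  have eqR: "rectangle_locus (line_through P v) (line_through Q v) (line_through z e) (line_through z f)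
     = {m + t *\<^sub>R v | t. A*t^2 + B*t + C \<ge> 0}"
  proof
    show "rectangle_locus (line_through P v) (line_through Q v) (line_through z e) (line_through z f)
       \<subseteq> {m + t *\<^sub>R v | t. A*t^2 + B*t + C \<ge> 0}"
    proof
      fix p assume "p \<in> rectangle_locus (line_through P v) (line_through Q v) (line_through z e) (line_through z f)"
      then obtain h where H: "cr (p - m) v = 0" "h \<ge> 0" "h^2 * V \<ge> c^2" "h^2 = 4 * G e f (p - z)"
        unfolding locus_HL HL_par[OF v] HL_np[OF k] m_def c_def V_def by blast
      then have "p \<in> line_through m v" using mem_line[OF v] by simp
      then obtain t where p: "p = m + t *\<^sub>R v" unfolding line_through_def by blast
      have "A*t^2 + B*t + C \<ge> 0" using H(3,4) expand[of t] p by simp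
      then show "p \<in> {m + t *\<^sub>R v | t. A*t^2 + B*t + C \<ge> 0}" using p by blast
    qed
    show "{m + t *\<^sub>R v | t. A*t^2 + B*t + C \<ge> 0} \<subseteq>
      rectangle_locus (line_through P v) (line_through Q v) (line_through z e) (line_through z f)"
    proof
      fix p assume "p \<in> {m + t *\<^sub>R v | t. A*t^2 + B*t + C \<ge> 0}"
      then obtain t where p: "p = m + t *\<^sub>R v" and t: "A*t^2 + B*t + C \<ge> 0" by blast
      define h where "h = sqrt (4 * G e f (p - z))"
      have G0: "G e f (p - z) \<ge> 0" using G_pd[OF k] by blast
      have h: "h \<ge> 0" "h^2 = 4 * G e f (p - z)" unfolding h_def using G0 by auto
      have "h^2 * V \<ge> c^2" using h(2) expand[of t] t p by simp
      moreover have "cr (p - m) v = 0" unfolding p by (simp add: cr_lin)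
      ultimately show "p \<in> rectangle_locus (line_through P v) (line_through Q v) (line_through z e) (line_through z f)"
        unfolding locus_HL HL_par[OF v] HL_np[OF k] using h m_def c_def V_def by blast
    qed
  qed
  show ?thesis unfolding eqR using quad_set[OF v A, of m B C] by blast
qed

lemma part1:
  assumes "is_line L2" "is_line L4" "parallel_lines L1 L3"
  shows "part1_concl (rectangle_locus L1 L3 L2 L4)"
proof -
  obtain P Q v where v: "v \<noteq> 0" "L1 = line_through P v" "L3 = line_through Q v"
    using assms(3) unfolding parallel_lines_def by blast
  show ?thesis
  proof (cases "parallel_lines L2 L4")
    case True
    then obtain P' Q' w where w: "w \<noteq> 0" "L2 = line_through P' w" "L4 = line_through Q' w"
      unfolding parallel_lines_def by blast
    have "is_line (rectangle_locus L1 L3 L2 L4) \<or> (\<exists>x. rectangle_locus L1 L3 L2 L4 = {x}) \<or> rectangle_locus L1 L3 L2 L4 = {}"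
      unfolding v w part1_pp[OF v(1) w(1)] by (rule two_midlines[OF v(1) w(1)])
    then show ?thesis by blast
  next
    case False
    then obtain z e f where "e \<noteq> 0" "f \<noteq> 0" "cr e f \<noteq> 0" "L2 = line_through z e" "L4 = line_through z f"
      using np_lines assms(1,2) by blast
    then show ?thesis using part1_pn[OF v(1)] v by simp
  qed
qed


definition E1 :: point where "E1 = vector [1, 0]"
definition E2 :: point where "E2 = vector [0, 1]"

lemma G_zero[simp]: "G e f 0 = 0" unfolding G_alt cr_def by simp

lemma G_polar: "G e f (x + d) - G e f x - G e f d =
   x$1 * (G e f (E1 + d) - G e f E1 - G e f d) + x$2 * (G e f (E2 + d) - G e f E2 - G e f d)"
  unfolding G_alt cr_def E1_def E2_def by (simp add: algebra_simps power2_eq_square)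

lemma orth_G: "e$1*f$1 + e$2*f$2 = 0 \<Longrightarrow> G e f y = y$1^2 + y$2^2"
  unfolding G_def by simp

lemma orth_cr:
  assumes "v \<noteq> 0" "w \<noteq> 0" "v \<bullet> w = 0"
  shows "cr v w \<noteq> 0"
proof
  assume c: "cr v w = 0"
  have "(v$1^2 + v$2^2) * (w$1^2 + w$2^2) = (v \<bullet> w)^2 + (cr v w)^2"
    unfolding inner2 cr_def using lagr by simp
  then have "(v$1^2 + v$2^2) * (w$1^2 + w$2^2) = 0" using assms(3) c by simp
  then show False using sqv_pos[OF assms(1)] sqv_pos[OF assms(2)] by (metis mult_pos_pos less_irrefl)
qed

lemma part3_core:
  assumes k: "cr e f \<noteq> 0" and k': "cr e' f' \<noteq> 0" and GG: "\<And>x. G e f x = G e' f' x" and z: "z1 \<noteq> z2"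
  shows "is_line (rectangle_locus (line_through z1 e) (line_through z1 f) (line_through z2 e') (line_through z2 f'))"
proof -
  define d where "d = z1 - z2"
  define \<Phi>1 where "\<Phi>1 = G e f (E1 + d) - G e f E1 - G e f d"
  define \<Phi>2 where "\<Phi>2 = G e f (E2 + d) - G e f E2 - G e f d"
  have R: "rectangle_locus (line_through z1 e) (line_through z1 f) (line_through z2 e') (line_through z2 f')
     = {p. G e f (p - z1) = G e f (p - z2)}"
  proof -
    have "(\<exists>h. HL (line_through z1 e) (line_through z1 f) p h \<and> HL (line_through z2 e') (line_through z2 f') p h)
       \<longleftrightarrow> G e f (p - z1) = G e f (p - z2)" for p
    proof
      assume "\<exists>h. HL (line_through z1 e) (line_through z1 f) p h \<and> HL (line_through z2 e') (line_through z2 f') p h"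
      then show "G e f (p - z1) = G e f (p - z2)" unfolding HL_np[OF k] HL_np[OF k'] GG[symmetric] by auto
    next
      assume H: "G e f (p - z1) = G e f (p - z2)"
      define h where "h = sqrt (4 * G e f (p - z1))"
      have "h \<ge> 0" "h^2 = 4 * G e f (p - z1)" unfolding h_def using G_pd(1)[OF k] by auto
      then show "\<exists>h. HL (line_through z1 e) (line_through z1 f) p h \<and> HL (line_through z2 e') (line_through z2 f') p h"
        unfolding HL_np[OF k] HL_np[OF k'] GG[symmetric] using H by auto
    qed
    then show ?thesis unfolding locus_HL by blast
  qed
  have F: "G e f (p - z1) = G e f (p - z2) \<longleftrightarrow>
      \<Phi>1 * p$1 + \<Phi>2 * p$2 = \<Phi>1 * z1$1 + \<Phi>2 * z1$2 - G e f d" for p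
  proof -
    have e: "p - z2 = (p - z1) + d" unfolding d_def by simp
    have "G e f (p - z2) - G e f (p - z1) - G e f d = (p - z1)$1 * \<Phi>1 + (p - z1)$2 * \<Phi>2"
      unfolding e using G_polar[of e f "p - z1" d] unfolding \<Phi>1_def \<Phi>2_def by simp
    then show ?thesis by (auto simp: algebra_simps)
  qed
  have nz: "\<Phi>1 \<noteq> 0 \<or> \<Phi>2 \<noteq> 0"
  proof (rule ccontr)
    assume "\<not> (\<Phi>1 \<noteq> 0 \<or> \<Phi>2 \<noteq> 0)"
    then have "G e f (- d + d) - G e f (- d) - G e f d = 0"
      using G_polar[of e f "- d" d] unfolding \<Phi>1_def \<Phi>2_def by simp
    then have "G e f d = 0" unfolding G_neg by simp
    then have "d = 0" using G_pd(2)[OF k] by blast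
    then show False using z unfolding d_def by simp
  qed
  show ?thesis unfolding R F using is_line_eq[OF nz] by simp
qed


lemma locus_swap2: "rectangle_locus L1 L3 L2 L4 = rectangle_locus L1 L3 L4 L2"
  unfolding locus_HL using HL_sym by blast

lemma par_not_univ:
  assumes v: "v \<noteq> 0"
  shows "rectangle_locus (line_through P v) (line_through Q v) L2 L4 \<noteq> UNIV"
proof
  assume U: "rectangle_locus (line_through P v) (line_through Q v) L2 L4 = UNIV"
  define p0 where "p0 = midpoint P Q + (vector [- v$2, v$1] :: point)"
  have "p0 \<in> rectangle_locus (line_through P v) (line_through Q v) L2 L4" using U by simp
  then have "cr (p0 - midpoint P Q) v = 0" unfolding locus_HL HL_par[OF v] by blast
  moreover have "cr (p0 - midpoint P Q) v = - (v$1^2 + v$2^2)" unfolding p0_def cr_def by (simp add: power2_eq_square)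
  ultimately show False using sqv_pos[OF v] by simp
qed

lemma Cg_zero: "cr e f \<noteq> 0 \<Longrightarrow> Cg e f = 0 \<longleftrightarrow> e$1*f$1+e$2*f$2 = 0"
  unfolding Cg_def by simp arith

lemma part2_fwd:
  assumes "is_line L1" "is_line L2" "is_line L3" "is_line L4"
    and ne: "{L1, L3} \<noteq> {L2, L4}"
    and U: "rectangle_locus L1 L3 L2 L4 = UNIV"
  shows "orthogonal_lines L1 L3 \<and> orthogonal_lines L2 L4 \<and>
        (\<exists>x. x \<in> L1 \<and> x \<in> L2 \<and> x \<in> L3 \<and> x \<in> L4)"
proof -
  have np13: "\<not> parallel_lines L1 L3"
  proof
    assume "parallel_lines L1 L3"
    then obtain P Q v where "v \<noteq> 0" "L1 = line_through P v" "L3 = line_through Q v"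
      unfolding parallel_lines_def by blast
    then show False using par_not_univ U by blast
  qed
  have np24: "\<not> parallel_lines L2 L4"
  proof
    assume "parallel_lines L2 L4"
    then obtain P Q v where "v \<noteq> 0" "L2 = line_through P v" "L4 = line_through Q v"
      unfolding parallel_lines_def by blast
    then show False using par_not_univ U locus_sym by metis
  qed
  obtain z1 e1 f1 where l1: "e1 \<noteq> 0" "f1 \<noteq> 0" "cr e1 f1 \<noteq> 0" "L1 = line_through z1 e1" "L3 = line_through z1 f1"
    using np_lines[OF assms(1,3) np13] by blast
  obtain z2 e2 f2 where l2: "e2 \<noteq> 0" "f2 \<noteq> 0" "cr e2 f2 \<noteq> 0" "L2 = line_through z2 e2" "L4 = line_through z2 f2"
    using np_lines[OF assms(2,4) np24] by blast
  have allG: "G e1 f1 (p - z1) = G e2 f2 (p - z2)" for p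
  proof -
    have "p \<in> rectangle_locus L1 L3 L2 L4" using U by simp
    then show ?thesis unfolding locus_HL l1(4,5) l2(4,5) HL_np[OF l1(3)] HL_np[OF l2(3)] by auto
  qed
  have "G e2 f2 (z1 - z2) = 0" using allG[of z1] by simp
  then have zz: "z1 = z2" using G_pd(2)[OF l2(3), of "z1 - z2"] by simp
  have GG: "G e1 f1 x = G e2 f2 x" for x using allG[of "x + z1"] zz by simp
  have cx: "Cg e1 f1 * (cr x f1 * cr e1 x) = Cg e2 f2 * (cr x f2 * cr e2 x)" for x
    using GG[of x] unfolding G_alt by simp
  have c2: "Cg e2 f2 = 0" if "Cg e1 f1 = 0"
  proof -
    have "Cg e2 f2 * (cr e2 f2 * cr e2 f2) = 0" using cx[of "e2 + f2"] that by (simp add: cr_lin)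
    then show ?thesis using l2(3) by simp
  qed
  have c1: "Cg e1 f1 = 0" if "Cg e2 f2 = 0"
  proof -
    have "Cg e1 f1 * (cr e1 f1 * cr e1 f1) = 0" using cx[of "e1 + f1"] that by (simp add: cr_lin)
    then show ?thesis using l1(3) by simp
  qed
  have both: "Cg e1 f1 = 0 \<and> Cg e2 f2 = 0"
  proof (rule ccontr)
    assume "\<not> (Cg e1 f1 = 0 \<and> Cg e2 f2 = 0)"
    then have n1: "Cg e1 f1 \<noteq> 0" using c1 c2 by blast
    have A: "cr e2 f1 = 0 \<or> cr e1 e2 = 0" using cx[of e2] n1 by simp
    have B: "cr f2 f1 = 0 \<or> cr e1 f2 = 0" using cx[of f2] n1 by simp
    have anti: "cr a b = 0 \<longleftrightarrow> cr b a = 0" for a b using cr_anti[of a b] by simp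
    show False
    proof (cases "cr e2 f1 = 0")
      case T1: True
      show False
      proof (cases "cr f2 f1 = 0")
        case True
        then show False using cr3[OF l1(2), of e2 f2] T1 anti l2(3) by blast
      next
        case False
        then have "cr e1 f2 = 0" using B by blast
        then have "L2 = L3" "L4 = L1" unfolding l1(4,5) l2(4,5) zz
          using line_eq_dir[OF l2(1) l1(2)] line_eq_dir[OF l1(1) l2(2)] T1 by auto
        then show False using ne by auto
      qed
    next
      case F1: False
      then have T1: "cr e1 e2 = 0" using A by blast
      show False
      proof (cases "cr e1 f2 = 0")
        case True
        then show False using cr3[OF l1(1), of e2 f2] T1 l2(3) by blast
      next
        case False
        then have "cr f2 f1 = 0" using B by blast
        then have "L2 = L1" "L4 = L3" unfolding l1(4,5) l2(4,5) zz
          using line_eq_dir[OF l1(1) l2(1)] line_eq_dir[OF l2(2) l1(2)] T1 by auto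
        then show False using ne by auto
      qed
    qed
  qed
  have o1: "orthogonal_lines L1 L3" unfolding orthogonal_lines_def
    using both Cg_zero[OF l1(3)] l1 inner2 by metis
  have o2: "orthogonal_lines L2 L4" unfolding orthogonal_lines_def
    using both Cg_zero[OF l2(3)] l2 inner2 by metis
  have "z1 \<in> L1" "z1 \<in> L2" "z1 \<in> L3" "z1 \<in> L4" unfolding l1(4,5) l2(4,5) zz line_through_def
    by (auto intro: exI[of _ 0])
  then show ?thesis using o1 o2 by blast
qed

lemma orth_rebase:
  assumes "orthogonal_lines L L'" "x \<in> L" "x \<in> L'"
  shows "\<exists>v w. v \<noteq> 0 \<and> w \<noteq> 0 \<and> cr v w \<noteq> 0 \<and> (\<forall>y. G v w y = y$1^2 + y$2^2) \<and>
     L = line_through x v \<and> L' = line_through x w"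
proof -
  obtain p q v w where o: "v \<noteq> 0" "w \<noteq> 0" "L = line_through p v" "L' = line_through q w" "v \<bullet> w = 0"
    using assms(1) unfolding orthogonal_lines_def by blast
  have "L = line_through x v" "L' = line_through x w" using rebase assms(2,3) o(3,4) by metis+
  moreover have "cr v w \<noteq> 0" using orth_cr o by blast
  moreover have "\<forall>y. G v w y = y$1^2 + y$2^2" using orth_G o(5) unfolding inner2 by blast
  ultimately show ?thesis using o by blast
qed

lemma part2_bwd:
  assumes "orthogonal_lines L1 L3" "orthogonal_lines L2 L4" "x \<in> L1" "x \<in> L2" "x \<in> L3" "x \<in> L4"
  shows "rectangle_locus L1 L3 L2 L4 = UNIV"
proof -
  obtain v w where a: "cr v w \<noteq> 0" "\<forall>y. G v w y = y$1^2 + y$2^2" "L1 = line_through x v" "L3 = line_through x w"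
    using orth_rebase[OF assms(1,3,5)] by blast
  obtain v' w' where b: "cr v' w' \<noteq> 0" "\<forall>y. G v' w' y = y$1^2 + y$2^2" "L2 = line_through x v'" "L4 = line_through x w'"
    using orth_rebase[OF assms(2,4,6)] by blast
  have "p \<in> rectangle_locus L1 L3 L2 L4" for p
  proof -
    define h where "h = sqrt (4 * G v w (p - x))"
    have "h \<ge> 0" "h^2 = 4 * G v w (p - x)" unfolding h_def using G_pd(1)[OF a(1)] by auto
    then show ?thesis unfolding locus_HL a(3,4) b(3,4) HL_np[OF a(1)] HL_np[OF b(1)] using a(2) b(2) by auto
  qed
  then show ?thesis by blast
qed

lemma part3_orth:
  assumes "is_line L1" "is_line L2" "is_line L3" "is_line L4"
    and np: "\<not> parallel_lines L1 L3" "\<not> parallel_lines L2 L4" and I: "L1 \<inter> L3 \<noteq> L2 \<inter> L4"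
    and o: "orthogonal_lines L1 L3" "orthogonal_lines L2 L4"
  shows "is_line (rectangle_locus L1 L3 L2 L4)"
proof -
  obtain z1 e1 f1 where l1: "cr e1 f1 \<noteq> 0" "L1 = line_through z1 e1" "L3 = line_through z1 f1"
    using np_lines[OF assms(1,3) np(1)] by blast
  obtain z2 e2 f2 where l2: "cr e2 f2 \<noteq> 0" "L2 = line_through z2 e2" "L4 = line_through z2 f2"
    using np_lines[OF assms(2,4) np(2)] by blast
  have zz: "z1 \<noteq> z2" using I inter_np[OF l1(1)] inter_np[OF l2(1)] l1 l2 by auto
  have m1: "z1 \<in> L1" "z1 \<in> L3" "z2 \<in> L2" "z2 \<in> L4" unfolding l1 l2 line_through_def
    by (auto intro: exI[of _ 0])
  obtain v w where a: "cr v w \<noteq> 0" "\<forall>y. G v w y = y$1^2 + y$2^2" "L1 = line_through z1 v" "L3 = line_through z1 w"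
    using orth_rebase[OF o(1) m1(1,2)] by blast
  obtain v' w' where b: "cr v' w' \<noteq> 0" "\<forall>y. G v' w' y = y$1^2 + y$2^2" "L2 = line_through z2 v'" "L4 = line_through z2 w'"
    using orth_rebase[OF o(2) m1(3,4)] by blast
  show ?thesis unfolding a(3,4) b(3,4) by (rule part3_core[OF a(1) b(1) _ zz]) (simp add: a(2) b(2))
qed

lemma part3_trans:
  assumes "is_line L1" "is_line L3"
    and np: "\<not> parallel_lines L1 L3" and I: "L1 \<inter> L3 \<noteq> L2 \<inter> L4"
    and t: "{translate_set t L1, translate_set t L3} = {L2, L4}"
  shows "is_line (rectangle_locus L1 L3 L2 L4)"
proof -
  obtain z e f where l1: "cr e f \<noteq> 0" "L1 = line_through z e" "L3 = line_through z f"
    using np_lines[OF assms(1,2) np] by blast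
  have "{line_through (z + t) e, line_through (z + t) f} = {L2, L4}"
    using t unfolding l1 translate_line .
  then have c: "(L2 = line_through (z + t) e \<and> L4 = line_through (z + t) f) \<or>
            (L2 = line_through (z + t) f \<and> L4 = line_through (z + t) e)"
    by (auto simp: doubleton_eq_iff)
  have i1: "L1 \<inter> L3 = {z}" using inter_np[OF l1(1)] l1 by simp
  show ?thesis
  proof (cases "L2 = line_through (z + t) e \<and> L4 = line_through (z + t) f")
    case True
    then have "L2 \<inter> L4 = {z + t}" using inter_np[OF l1(1)] by simp
    then have "z \<noteq> z + t" using i1 I by auto
    then show ?thesis unfolding l1(2,3) using True part3_core[OF l1(1) l1(1)] by simp
  next
    case False
    then have F: "L2 = line_through (z + t) f" "L4 = line_through (z + t) e" using c by auto
    then have "L2 \<inter> L4 = {z + t}" using inter_np[OF l1(1)] by auto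
    then have "z \<noteq> z + t" using i1 I by auto
    then have "is_line (rectangle_locus L1 L3 L4 L2)" unfolding l1(2,3) F using part3_core[OF l1(1) l1(1)] by simp
    then show ?thesis using locus_swap2 by metis
  qed
qed

theorem proposition4p4:
  fixes L1 L2 L3 L4 :: "point set"
  assumes "is_line L1" "is_line L2" "is_line L3" "is_line L4"
    and "L1 \<noteq> L3" "L2 \<noteq> L4"
    and "{L1, L3} \<noteq> {L2, L4}"
  shows
    "(parallel_lines L1 L3 \<or> parallel_lines L2 L4 \<longrightarrow>
        is_line (rectangle_locus L1 L3 L2 L4)
      \<or> (\<exists>L a b. is_line L \<and> a \<in> L \<and> b \<in> L \<and> a \<noteq> b \<and>
            rectangle_locus L1 L3 L2 L4 = L - open_segment a b)
      \<or> (\<exists>x. rectangle_locus L1 L3 L2 L4 = {x})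
      \<or> rectangle_locus L1 L3 L2 L4 = {})
   \<and> (rectangle_locus L1 L3 L2 L4 = UNIV \<longleftrightarrow>
        orthogonal_lines L1 L3 \<and> orthogonal_lines L2 L4 \<and>
        (\<exists>x. x \<in> L1 \<and> x \<in> L2 \<and> x \<in> L3 \<and> x \<in> L4))
   \<and> (\<not> parallel_lines L1 L3 \<and> \<not> parallel_lines L2 L4 \<and> L1 \<inter> L3 \<noteq> L2 \<inter> L4 \<and>
        ((orthogonal_lines L1 L3 \<and> orthogonal_lines L2 L4) \<or>
         (\<exists>v. {translate_set v L1, translate_set v L3} = {L2, L4}) \<or>
         (\<exists>v. {translate_set v L2, translate_set v L4} = {L1, L3}))
      \<longrightarrow> is_line (rectangle_locus L1 L3 L2 L4))"
proof (intro conjI impI)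
  assume "parallel_lines L1 L3 \<or> parallel_lines L2 L4"
  then show "part1_concl (rectangle_locus L1 L3 L2 L4)"
  proof
    assume "parallel_lines L1 L3"
    then show ?thesis using part1[OF assms(2,4)] by blast
  next
    assume "parallel_lines L2 L4"
    then show ?thesis using part1[OF assms(1,3)] locus_sym by metis
  qed
next
  show "rectangle_locus L1 L3 L2 L4 = UNIV \<longleftrightarrow>
        orthogonal_lines L1 L3 \<and> orthogonal_lines L2 L4 \<and>
        (\<exists>x. x \<in> L1 \<and> x \<in> L2 \<and> x \<in> L3 \<and> x \<in> L4)"
    using part2_fwd[OF assms(1-4,7)] part2_bwd by blast
next
  assume H: "\<not> parallel_lines L1 L3 \<and> \<not> parallel_lines L2 L4 \<and> L1 \<inter> L3 \<noteq> L2 \<inter> L4 \<and>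
        ((orthogonal_lines L1 L3 \<and> orthogonal_lines L2 L4) \<or>
         (\<exists>v. {translate_set v L1, translate_set v L3} = {L2, L4}) \<or>
         (\<exists>v. {translate_set v L2, translate_set v L4} = {L1, L3}))"
  show "is_line (rectangle_locus L1 L3 L2 L4)"
  proof -
    have "L2 \<inter> L4 \<noteq> L1 \<inter> L3" using H by metis
    then show ?thesis using H part3_orth[OF assms(1-4)] part3_trans[OF assms(1,3), of L2 L4]
      part3_trans[OF assms(2,4), of L1 L3] locus_sym by metis
  qed
qed

end
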